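(* Let $\psi:R\to R^*$ be a $G_0$-equivariant isomorphism; it is either symmetric ($\psi(r)(t)=\psi(t)(r)$) or alternating ($\psi(r)(t)=-\psi(t)(r)$). For \[M=\begin{pmatrix}\mathsf A&\mathsf B\\ \mathsf K&\mathsf D\end{pmatrix}\in\mathrm{End}(H\oplus H^* )\] (with $\mathsf A:H\to H$, $\mathsf B:H^*\to H$, $\mathsf K:H\to H^*$, $\mathsf D:H^*\to H^*$), let $\Phi(M)$ be the $G_0$-equivariant operator on $(H\otimes R)\oplus(H^*\otimes R^* )$ given by \[\begin{pmatrix}\mathsf A\otimes\mathrm{Id}_R&\mathsf B\otimes\psi^{-1}\\ \mathsf K\otimes\psi&\mathsf D\otimes\mathrm{Id}_{R^*}\end{pmatrix}.\] Then $\Phi(M)$ respects $b$ if and only if $M$ respects - the symmetric form $s(h_1+f_1,h_2+f_2)=f_1(h_2)+f_2(h_1)$ when $\psi$ is symmetric, resp. - the alternating form $a(h_1+f_1,h_2+f_2)=f_1(h_2)-f_2(h_1)$ when $\psi$ is alternating.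
   Context: Setting: - $G_0$ is a compact group, and $R$ is a finite-dimensional irreducible unitary $G_0$-representation isomorphic to its dual $R^*$. - $V$ is a finite-dimensional unitary $G_0$-representation all of whose irreducible subrepresentations are isomorphic to $R$. Duals carry the action $g(f)=f\circ g^{-1}$. - $H=\mathrm{Hom}_{G_0}(R,V)$, $H^*=\mathrm{Hom}_{G_0}(R^*,V^* )$, paired by $f(h)=\sum_i f(\vartheta_i)(h(e_i))$, where $(e_i)$ is a basis of $R$ and $(\vartheta_i)$ is the dual basis. - $\varepsilon:(H\otimes R)\oplus(H^*\otimes R^* )\to V\oplus V^*$, $h\otimes r+f\otimes t\mapsto h(r)+f(t)$, is a $G_0$-equivariant isomorphism. - $b$ denotes the pullback via $\varepsilon$ of the symmetric form $b_0(v_1+f_1,v_2+f_2)=f_1(v_2)+f_2(v_1)$ on $V\oplus V^*$. A linear map $M$ respects a bilinear form $F$ either as an isometry, $F(Mw_1,Mw_2)=F(w_1,w_2)$ (for invertible $M$), or infinitesimally, $F(Mw_1,w_2)+F(w_1,Mw_2)=0$. The equivalence holds in each sense. *)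

theory Defs
  imports "HOL-Analysis.Analysis" "HOL-Algebra.Group"
begin

text \<open>Conventions. All spaces are finite-dimensional complex coordinate spaces
 \<open>complex^'n\<close>; linear maps are matrices acting by \<open>*v\<close>. The dual of \<open>complex^'n\<close>
 is again \<open>complex^'n\<close> (coordinates w.r.t. the dual basis), the evaluation
 pairing being \<open>cdot\<close>.\<close>

definition cdot :: "complex^'n \<Rightarrow> complex^'n \<Rightarrow> complex" where
  "cdot f v = (\<Sum>i\<in>UNIV. f$i * v$i)"

definition cadjoint :: "complex^'n^'m \<Rightarrow> complex^'m^'n" where
  "cadjoint A = (\<chi> i j. cnj (A$j$i))"

text \<open>Compact (Hausdorff) topological group, modelled as an HOL-Algebra group
 whose carrier lives in a topological space.\<close>
definition compact_group :: "('g::t2_space, 'b) monoid_scheme \<Rightarrow> bool" where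
  "compact_group G \<longleftrightarrow> group G \<and> compact (carrier G) \<and>
     continuous_on (carrier G \<times> carrier G) (\<lambda>(x,y). x \<otimes>\<^bsub>G\<^esub> y) \<and>
     continuous_on (carrier G) (\<lambda>x. inv\<^bsub>G\<^esub> x)"

text \<open>Finite-dimensional continuous unitary representation on \<open>complex^'n\<close>.\<close>
definition unitary_rep :: "('g::t2_space, 'b) monoid_scheme \<Rightarrow> ('g \<Rightarrow> complex^'n^'n) \<Rightarrow> bool" where
  "unitary_rep G \<rho> \<longleftrightarrow> continuous_on (carrier G) \<rho> \<and> \<rho> \<one>\<^bsub>G\<^esub> = mat 1 \<and>
     (\<forall>x\<in>carrier G. \<forall>y\<in>carrier G. \<rho> (x \<otimes>\<^bsub>G\<^esub> y) = \<rho> x ** \<rho> y) \<and>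
     (\<forall>x\<in>carrier G. \<rho> x ** cadjoint (\<rho> x) = mat 1)"

text \<open>Dual representation \<open>g(f) = f \<circ> g\<^sup>-\<^sup>1\<close> in dual-basis coordinates.\<close>
definition dual_rep :: "('g \<Rightarrow> complex^'n^'n) \<Rightarrow> 'g \<Rightarrow> complex^'n^'n" where
  "dual_rep \<rho> g = transpose (matrix_inv (\<rho> g))"

definition invariant_subspace :: "('g, 'b) monoid_scheme \<Rightarrow> ('g \<Rightarrow> complex^'n^'n) \<Rightarrow> (complex^'n) set \<Rightarrow> bool" where
  "invariant_subspace G \<rho> W \<longleftrightarrow> vec.subspace W \<and> (\<forall>g\<in>carrier G. \<forall>w\<in>W. \<rho> g *v w \<in> W)"

definition irreducible_rep :: "('g, 'b) monoid_scheme \<Rightarrow> ('g \<Rightarrow> complex^'n^'n) \<Rightarrow> bool" where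
  "irreducible_rep G \<rho> \<longleftrightarrow> (\<forall>W. invariant_subspace G \<rho> W \<longrightarrow> W = {0} \<or> W = UNIV)"

text \<open>An irreducible subrepresentation \<open>W\<close> of \<open>\<rho>\<close>.\<close>
definition irreducible_subrep :: "('g, 'b) monoid_scheme \<Rightarrow> ('g \<Rightarrow> complex^'n^'n) \<Rightarrow> (complex^'n) set \<Rightarrow> bool" where
  "irreducible_subrep G \<rho> W \<longleftrightarrow> invariant_subspace G \<rho> W \<and> W \<noteq> {0} \<and>
     (\<forall>W'. W' \<subseteq> W \<longrightarrow> invariant_subspace G \<rho> W' \<longrightarrow> W' = {0} \<or> W' = W)"

text \<open>\<open>W\<close> (a subrepresentation of \<open>\<rho>V\<close>) is isomorphic to the representation \<open>\<rho>R\<close>.\<close>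
definition subrep_iso :: "('g, 'b) monoid_scheme \<Rightarrow> ('g \<Rightarrow> complex^'r^'r) \<Rightarrow> ('g \<Rightarrow> complex^'v^'v) \<Rightarrow> (complex^'v) set \<Rightarrow> bool" where
  "subrep_iso G \<rho>R \<rho>V W \<longleftrightarrow> (\<exists>T::complex^'r^'v. inj ((*v) T) \<and> range ((*v) T) = W \<and>
     (\<forall>g\<in>carrier G. T ** \<rho>R g = \<rho>V g ** T))"

text \<open>Equivariant linear maps (intertwiners) \<open>Hom_G(\<rho>1,\<rho>2)\<close>, as matrices.\<close>
definition equiv_maps :: "('g, 'b) monoid_scheme \<Rightarrow> ('g \<Rightarrow> complex^'r^'r) \<Rightarrow> ('g \<Rightarrow> complex^'v^'v) \<Rightarrow> (complex^'r^'v) set" where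
  "equiv_maps G \<rho>1 \<rho>2 = {T. \<forall>g\<in>carrier G. T ** \<rho>1 g = \<rho>2 g ** T}"

text \<open>Linear combination of a family of matrices.\<close>
definition mat_comb :: "complex^'k \<Rightarrow> ('k \<Rightarrow> complex^'r^'v) \<Rightarrow> complex^'r^'v" where
  "mat_comb x b = (\<chi> p q. \<Sum>i\<in>UNIV. x$i * b i $ p $ q)"

text \<open>\<open>b\<close> is a basis of the (complex) space of matrices \<open>S\<close>.\<close>
definition is_mat_basis :: "('k::finite \<Rightarrow> complex^'r^'v) \<Rightarrow> (complex^'r^'v) set \<Rightarrow> bool" where
  "is_mat_basis b S \<longleftrightarrow> (\<forall>x. mat_comb x b \<in> S) \<and> (\<forall>x. mat_comb x b = 0 \<longrightarrow> x = 0) \<and>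
     (\<forall>T\<in>S. \<exists>x. T = mat_comb x b)"

text \<open>Pairing \<open>H\<^sup>* \<times> H \<rightarrow> \<complex>\<close>: \<open>f(h) = \<Sum>\<^sub>i f(\<vartheta>\<^sub>i)(h(e\<^sub>i))\<close>, for matrices \<open>f : R\<^sup>* \<rightarrow> V\<^sup>*\<close>, \<open>h : R \<rightarrow> V\<close>.\<close>
definition hom_pair :: "complex^'r^'v \<Rightarrow> complex^'r^'v \<Rightarrow> complex" where
  "hom_pair f h = (\<Sum>i\<in>UNIV. cdot (f *v axis i 1) (h *v axis i 1))"

text \<open>The forms \<open>s\<close> and \<open>a\<close> on \<open>H \<oplus> H\<^sup>*\<close>, where \<open>H \<cong> complex^'k\<close> via basis \<open>hb\<close>
 and \<open>H\<^sup>* \<cong> complex^'l\<close> via basis \<open>fb\<close>.\<close>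
definition form_s :: "('k::finite \<Rightarrow> complex^'r^'v) \<Rightarrow> ('l::finite \<Rightarrow> complex^'r^'v) \<Rightarrow>
    ((complex^'k) \<times> (complex^'l)) \<Rightarrow> ((complex^'k) \<times> (complex^'l)) \<Rightarrow> complex" where
  "form_s hb fb w1 w2 = (case w1 of (h1, f1) \<Rightarrow> case w2 of (h2, f2) \<Rightarrow>
     hom_pair (mat_comb f1 fb) (mat_comb h2 hb) + hom_pair (mat_comb f2 fb) (mat_comb h1 hb))"

definition form_a :: "('k::finite \<Rightarrow> complex^'r^'v) \<Rightarrow> ('l::finite \<Rightarrow> complex^'r^'v) \<Rightarrow>
    ((complex^'k) \<times> (complex^'l)) \<Rightarrow> ((complex^'k) \<times> (complex^'l)) \<Rightarrow> complex" where
  "form_a hb fb w1 w2 = (case w1 of (h1, f1) \<Rightarrow> case w2 of (h2, f2) \<Rightarrow>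
     hom_pair (mat_comb f1 fb) (mat_comb h2 hb) - hom_pair (mat_comb f2 fb) (mat_comb h1 hb))"

text \<open>Tensor products: \<open>H \<otimes> R \<cong> complex^'k \<otimes> complex^'r\<close> is modelled as \<open>'k \<times> 'r\<close>
 coefficient matrices \<open>complex^'r^'k\<close> (pure tensor \<open>h \<otimes> r\<close> = outer product), and
 similarly \<open>H\<^sup>* \<otimes> R\<^sup>* \<cong> complex^'r^'l\<close>. The map \<open>\<epsilon>\<close>: \<open>h \<otimes> r + f \<otimes> t \<mapsto> h(r) + f(t)\<close>.\<close>
definition eps :: "('k::finite \<Rightarrow> complex^'r^'v) \<Rightarrow> ('l::finite \<Rightarrow> complex^'r^'v) \<Rightarrow>
    ((complex^'r^'k) \<times> (complex^'r^'l)) \<Rightarrow> ((complex^'v) \<times> (complex^'v))" where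
  "eps hb fb X = (case X of (X1, X2) \<Rightarrow>
     ((\<chi> p. \<Sum>i\<in>UNIV. \<Sum>j\<in>UNIV. X1$i$j * (hb i *v axis j 1)$p),
      (\<chi> p. \<Sum>i\<in>UNIV. \<Sum>j\<in>UNIV. X2$i$j * (fb i *v axis j 1)$p)))"

text \<open>The symmetric form \<open>b\<^sub>0\<close> on \<open>V \<oplus> V\<^sup>*\<close> and its pullback \<open>b\<close>.\<close>
definition form_b0 :: "((complex^'v) \<times> (complex^'v)) \<Rightarrow> ((complex^'v) \<times> (complex^'v)) \<Rightarrow> complex" where
  "form_b0 w1 w2 = (case w1 of (v1, f1) \<Rightarrow> case w2 of (v2, f2) \<Rightarrow> cdot f1 v2 + cdot f2 v1)"

definition form_b :: "('k::finite \<Rightarrow> complex^'r^'v) \<Rightarrow> ('l::finite \<Rightarrow> complex^'r^'v) \<Rightarrow>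
    ((complex^'r^'k) \<times> (complex^'r^'l)) \<Rightarrow> ((complex^'r^'k) \<times> (complex^'r^'l)) \<Rightarrow> complex" where
  "form_b hb fb X Y = form_b0 (eps hb fb X) (eps hb fb Y)"

text \<open>The block operator \<open>M = [A B; K D]\<close> on \<open>H \<oplus> H\<^sup>*\<close>.\<close>
definition block_op :: "complex^'k^'k \<Rightarrow> complex^'l^'k \<Rightarrow> complex^'k^'l \<Rightarrow> complex^'l^'l \<Rightarrow>
    ((complex^'k) \<times> (complex^'l)) \<Rightarrow> ((complex^'k) \<times> (complex^'l))" where
  "block_op A B K D w = (case w of (h, f) \<Rightarrow> (A *v h + B *v f, K *v h + D *v f))"

text \<open>\<open>\<Phi>(M) = [A\<otimes>Id, B\<otimes>\<psi>\<^sup>-\<^sup>1; K\<otimes>\<psi>, D\<otimes>Id]\<close>; \<open>(S \<otimes> C) X = S ** X ** transpose C\<close>.\<close>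
definition Phi_op :: "complex^'r^'r \<Rightarrow> complex^'k^'k \<Rightarrow> complex^'l^'k \<Rightarrow> complex^'k^'l \<Rightarrow> complex^'l^'l \<Rightarrow>
    ((complex^'r^'k) \<times> (complex^'r^'l)) \<Rightarrow> ((complex^'r^'k) \<times> (complex^'r^'l))" where
  "Phi_op \<psi> A B K D X = (case X of (X1, X2) \<Rightarrow>
     (A ** X1 + B ** X2 ** transpose (matrix_inv \<psi>), K ** X1 ** transpose \<psi> + D ** X2))"

definition respects_isometry :: "('w \<Rightarrow> 'w \<Rightarrow> complex) \<Rightarrow> ('w \<Rightarrow> 'w) \<Rightarrow> bool" where
  "respects_isometry F T \<longleftrightarrow> (\<forall>w1 w2. F (T w1) (T w2) = F w1 w2)"

definition respects_infinitesimal :: "('w \<Rightarrow> 'w \<Rightarrow> complex) \<Rightarrow> ('w \<Rightarrow> 'w) \<Rightarrow> bool" where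
  "respects_infinitesimal F T \<longleftrightarrow> (\<forall>w1 w2. F (T w1) w2 + F w1 (T w2) = 0)"

end

theory Submission
  imports Defs "Jordan_Normal_Form.Spectral_Radius"
begin

lemma complex_eigen:
  fixes N :: "complex^'n^'n"
  shows "\<exists>c v. v \<noteq> 0 \<and> N *v v = c *s v"
proof -
  define n where "n = CARD('n)"
  obtain e :: "nat \<Rightarrow> 'n" where e: "bij_betw e {0..<n} UNIV"
    using ex_bij_betw_nat_finite[of "UNIV :: 'n set"] unfolding n_def by auto
  define NJ where "NJ = Matrix.mat n n (\<lambda>(i,j). N $ e i $ e j)"
  have NJc: "NJ \<in> carrier_mat n n" by (simp add: NJ_def)
  have n0: "n > 0" by (simp add: n_def)
  from spectrum_non_empty[OF NJc n0] obtain k where "k \<in> spectrum NJ" by blast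
  then have "eigenvalue NJ k" by (simp add: spectrum_def)
  then obtain v where "eigenvector NJ v k" by (auto simp: eigenvalue_def)
  hence v: "v \<in> carrier_vec n" "v \<noteq> 0\<^sub>v n" "NJ *\<^sub>v v = k \<cdot>\<^sub>v v"
    by (auto simp: eigenvector_def NJ_def)
  define ei where "ei = the_inv_into {0..<n} e"
  have ei1: "ei (e j) = j" if "j < n" for j
    using e that unfolding ei_def by (simp add: bij_betw_def the_inv_into_f_f)
  have ei2a: "ei a < n" for a
    using e the_inv_into_into[of e "{0..<n}" a "{0..<n}"] unfolding ei_def bij_betw_def
    by auto
  have ei2b: "e (ei a) = a" for a
    using e f_the_inv_into_f[of e "{0..<n}" a] unfolding ei_def bij_betw_def
    by auto
  note ei2 = ei2a ei2b
  define w :: "complex^'n" where "w = (\<chi> a. v $ ei a)"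
  have "w \<noteq> 0"
  proof
    assume "w = 0"
    have "v = 0\<^sub>v n"
    proof (rule eq_vecI)
      fix j assume j: "j < dim_vec (0\<^sub>v n :: complex vec)"
      hence "j < n" by simp
      have "w $ e j = 0" using \<open>w = 0\<close> by simp
      then show "v $ j = 0\<^sub>v n $ j" using \<open>j < n\<close> by (simp add: w_def ei1)
    qed (use v in auto)
    with v show False by simp
  qed
  moreover have "N *v w = k *s w"
  proof (rule Finite_Cartesian_Product.vec_eq_iff[THEN iffD2], rule allI)
    fix a
    have "(N *v w) $ a = (\<Sum>b\<in>UNIV. N $ a $ b * v $ ei b)"
      by (simp add: matrix_vector_mult_def w_def)
    also have "\<dots> = (\<Sum>j\<in>{0..<n}. N $ a $ e j * v $ ei (e j))"
      using sum.reindex_bij_betw[OF e, of "\<lambda>b. N $ a $ b * v $ ei b"] by simp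
    also have "\<dots> = (\<Sum>j\<in>{0..<n}. N $ e (ei a) $ e j * v $ j)"
      using ei1 ei2 by (intro sum.cong) auto
    also have "\<dots> = (NJ *\<^sub>v v) $ (ei a)"
      using ei2 v(1) by (simp add: NJ_def scalar_prod_def row_def)
    also have "\<dots> = k * v $ ei a" using v(3) ei2 v(1) by simp
    finally show "(N *v w) $ a = (k *s w) $ a" by (simp add: w_def)
  qed
  ultimately show ?thesis by blast
qed


no_notation Matrix.vec_index (infixl \<open>$\<close> 100)

lemma schur:
  fixes N :: "complex^'n^'n" and \<rho> :: "'g \<Rightarrow> complex^'n^'n"
  assumes irr: "irreducible_rep G \<rho>" and comm: "\<forall>g\<in>carrier G. N ** \<rho> g = \<rho> g ** N"
  shows "\<exists>c. \<forall>v. N *v v = c *s v"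
proof -
  obtain c v where v: "v \<noteq> 0" "N *v v = c *s v" using complex_eigen by blast
  define W where "W = {w. N *v w = c *s w}"
  have sub: "vec.subspace W"
    unfolding vec.subspace_def W_def
    by (auto simp: matrix_vector_right_distrib vector_ssub_ldistrib vector_scalar_commute)
  have inv: "\<rho> g *v w \<in> W" if g: "g \<in> carrier G" and w: "w \<in> W" for g w
  proof -
    have w: "N *v w = c *s w" using w by (simp add: W_def)
    have "N *v (\<rho> g *v w) = (N ** \<rho> g) *v w" by (simp add: matrix_vector_mul_assoc)
    also have "\<dots> = \<rho> g *v (N *v w)" using comm g by (simp add: matrix_vector_mul_assoc)
    also have "\<dots> = c *s (\<rho> g *v w)" using w by (simp add: vector_scalar_commute)
    finally show ?thesis by (simp add: W_def)
  qed
  have "invariant_subspace G \<rho> W"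
    unfolding invariant_subspace_def using sub inv by blast
  with irr have "W = {0} \<or> W = UNIV" unfolding irreducible_rep_def by blast
  moreover have "v \<in> W" using v by (simp add: W_def)
  ultimately have "W = UNIV" using v by auto
  then show ?thesis unfolding W_def by auto
qed

lemma inv_props:
  fixes A :: "'a::field^'n^'n"
  assumes "invertible A"
  shows "A ** matrix_inv A = Finite_Cartesian_Product.mat 1" "matrix_inv A ** A = Finite_Cartesian_Product.mat 1"
proof -
  have "\<exists>A'. A ** A' = Finite_Cartesian_Product.mat 1 \<and> A' ** A = Finite_Cartesian_Product.mat 1" using assms by (simp add: invertible_def)
  then have "A ** matrix_inv A = Finite_Cartesian_Product.mat 1 \<and> matrix_inv A ** A = Finite_Cartesian_Product.mat 1"
    unfolding matrix_inv_def by (rule someI_ex)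
  then show "A ** matrix_inv A = Finite_Cartesian_Product.mat 1" "matrix_inv A ** A = Finite_Cartesian_Product.mat 1" by auto
qed

lemma unitary_inv:
  assumes "unitary_rep G \<rho>" "g \<in> carrier G"
  shows "\<rho> g ** matrix_inv (\<rho> g) = Finite_Cartesian_Product.mat 1" "matrix_inv (\<rho> g) ** \<rho> g = Finite_Cartesian_Product.mat 1"
proof -
  have "invertible (\<rho> g)" using assms unfolding unitary_rep_def invertible_right_inverse by blast
  then show "\<rho> g ** matrix_inv (\<rho> g) = Finite_Cartesian_Product.mat 1" "matrix_inv (\<rho> g) ** \<rho> g = Finite_Cartesian_Product.mat 1"
    using inv_props by auto
qed

lemma comm_lemma:
  fixes f h :: "complex^'r^'v"
  assumes R: "unitary_rep G \<rho>R" and V: "unitary_rep G \<rho>V"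
    and f: "f \<in> equiv_maps G (dual_rep \<rho>R) (dual_rep \<rho>V)"
    and h: "h \<in> equiv_maps G \<rho>R \<rho>V"
  shows "\<forall>g\<in>carrier G. (transpose f ** h) ** \<rho>R g = \<rho>R g ** (transpose f ** h)"
proof
  fix g assume g: "g \<in> carrier G"
  define Rg where "Rg = \<rho>R g"
  define Vg where "Vg = \<rho>V g"
  define F where "F = transpose f"
  have "f ** transpose (matrix_inv Rg) = transpose (matrix_inv Vg) ** f"
    using f g unfolding equiv_maps_def dual_rep_def Rg_def Vg_def by auto
  then have "transpose (f ** transpose (matrix_inv Rg)) = transpose (transpose (matrix_inv Vg) ** f)"
    by simp
  then have e1: "matrix_inv Rg ** F = F ** matrix_inv Vg"
    by (simp add: matrix_transpose_mul F_def)
  have "F ** Vg = (Rg ** matrix_inv Rg) ** F ** Vg"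
    using unitary_inv[OF R g] by (simp add: Rg_def)
  also have "\<dots> = Rg ** (matrix_inv Rg ** F) ** Vg" by (simp add: matrix_mul_assoc)
  also have "\<dots> = Rg ** F ** (matrix_inv Vg ** Vg)" by (simp add: e1 matrix_mul_assoc)
  also have "\<dots> = Rg ** F" using unitary_inv[OF V g] by (simp add: Vg_def)
  finally have e2: "F ** Vg = Rg ** F" .
  have e3: "h ** Rg = Vg ** h" using h g unfolding equiv_maps_def Rg_def Vg_def by auto
  have "(F ** h) ** Rg = F ** Vg ** h" by (simp add: matrix_mul_assoc[symmetric] e3)
  also have "\<dots> = Rg ** (F ** h)" by (simp add: e2 matrix_mul_assoc)
  finally show "(transpose f ** h) ** \<rho>R g = \<rho>R g ** (transpose f ** h)"
    by (simp add: F_def Rg_def)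
qed

lemma cdot_transpose: "cdot (B *v a) b = cdot a (transpose B *v b)"
  unfolding cdot_def matrix_vector_mult_def transpose_def
  by (simp add: sum_distrib_left sum_distrib_right mult_ac) (rule sum.swap)

lemma cdot_scale_right: "cdot a (c *s b) = c * cdot a b"
  unfolding cdot_def by (simp add: sum_distrib_left mult_ac)
lemma cdot_scale_left: "cdot (c *s a) b = c * cdot a b"
  unfolding cdot_def by (simp add: sum_distrib_left mult_ac)
lemma cdot_sum_left: "cdot (sum u A) v = (\<Sum>a\<in>A. cdot (u a) v)"
  unfolding cdot_def by (simp add: sum_component sum_distrib_right) (rule sum.swap)
lemma cdot_sum_right: "cdot v (sum u A) = (\<Sum>a\<in>A. cdot v (u a))"
  unfolding cdot_def by (simp add: sum_component sum_distrib_left) (rule sum.swap)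

lemma cdot_axis_right: "cdot x (axis j (1::complex)) = x $ j"
proof -
  have "cdot x (axis j 1) = (\<Sum>i\<in>UNIV. if i = j then x $ i else 0)"
    unfolding cdot_def by (rule sum.cong) (auto simp: axis_def)
  then show ?thesis by simp
qed
lemma cdot_axis: "cdot (axis i 1) (axis j (1::complex)) = (if i = j then 1 else 0)"
  by (simp only: cdot_axis_right) (simp add: axis_def)

lemma key_lemma:
  fixes f h :: "complex^'r^'v"
  assumes R: "unitary_rep G \<rho>R" and irr: "irreducible_rep G \<rho>R" and V: "unitary_rep G \<rho>V"
    and f: "f \<in> equiv_maps G (dual_rep \<rho>R) (dual_rep \<rho>V)"
    and h: "h \<in> equiv_maps G \<rho>R \<rho>V"
  shows "cdot (f *v x) (h *v y) = hom_pair f h / of_nat CARD('r) * cdot x y"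
proof -
  obtain c where c: "\<forall>v. (transpose f ** h) *v v = c *s v"
    using schur[OF irr comm_lemma[OF R V f h]] by blast
  have gen: "cdot (f *v x) (h *v y) = c * cdot x y" for x y
    by (simp add: cdot_transpose matrix_vector_mul_assoc c cdot_scale_right)
  have "hom_pair f h = (\<Sum>i\<in>(UNIV::'r set). c)"
    unfolding hom_pair_def gen by (simp add: cdot_axis)
  then have "hom_pair f h = of_nat CARD('r) * c" by simp
  then show ?thesis using gen by simp
qed


lemma mat_comb_mult: "mat_comb x b *v v = (\<Sum>i\<in>UNIV. x$i *s (b i *v v))"
proof (rule Finite_Cartesian_Product.vec_eq_iff[THEN iffD2], rule allI)
  fix p
  have "(mat_comb x b *v v) $ p = (\<Sum>q\<in>UNIV. \<Sum>i\<in>UNIV. x$i * b i $ p $ q * v $ q)"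
    by (simp add: mat_comb_def matrix_vector_mult_def sum_distrib_right)
  also have "\<dots> = (\<Sum>i\<in>UNIV. \<Sum>q\<in>UNIV. x$i * b i $ p $ q * v $ q)"
    by (rule sum.swap)
  also have "\<dots> = (\<Sum>i\<in>UNIV. x$i *s (b i *v v)) $ p"
    by (simp add: sum_component matrix_vector_mult_def sum_distrib_left mult_ac)
  finally show "(mat_comb x b *v v) $ p = (\<Sum>i\<in>UNIV. x$i *s (b i *v v)) $ p" .
qed

lemma sum3_swap: "(\<Sum>a\<in>A. \<Sum>b\<in>B. \<Sum>c\<in>C. f a b c) = (\<Sum>c\<in>C. \<Sum>a\<in>A. \<Sum>b\<in>B. f a b c)"
proof -
  have "(\<Sum>a\<in>A. \<Sum>b\<in>B. \<Sum>c\<in>C. f a b c) = (\<Sum>a\<in>A. \<Sum>c\<in>C. \<Sum>b\<in>B. f a b c)"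
    by (rule sum.cong[OF refl], rule sum.swap)
  also have "\<dots> = (\<Sum>c\<in>C. \<Sum>a\<in>A. \<Sum>b\<in>B. f a b c)" by (rule sum.swap)
  finally show ?thesis .
qed

lemma sum3_swap2: "(\<Sum>a\<in>A. \<Sum>b\<in>B. \<Sum>c\<in>C. f a b c) = (\<Sum>c\<in>C. \<Sum>b\<in>B. \<Sum>a\<in>A. f a b c)"
proof -
  have "(\<Sum>a\<in>A. \<Sum>b\<in>B. \<Sum>c\<in>C. f a b c) = (\<Sum>c\<in>C. \<Sum>a\<in>A. \<Sum>b\<in>B. f a b c)"
    by (rule sum3_swap)
  also have "\<dots> = (\<Sum>c\<in>C. \<Sum>b\<in>B. \<Sum>a\<in>A. f a b c)"
    by (rule sum.cong[OF refl], rule sum.swap)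
  finally show ?thesis .
qed

definition pp :: "('k::finite \<Rightarrow> complex^'r^'v) \<Rightarrow> ('l::finite \<Rightarrow> complex^'r^'v) \<Rightarrow> complex^'l \<Rightarrow> complex^'k \<Rightarrow> complex" where
  "pp hb fb f h = (\<Sum>i\<in>UNIV. \<Sum>i'\<in>UNIV. f$i * h$i' * hom_pair (fb i) (hb i'))"

lemma hp_pp: "hom_pair (mat_comb f fb) (mat_comb h hb) = pp hb fb f h"
proof -
  have "hom_pair (mat_comb f fb) (mat_comb h hb) =
     (\<Sum>q\<in>UNIV. \<Sum>i'\<in>UNIV. \<Sum>i\<in>UNIV. f$i * (h$i' * cdot (fb i *v axis q 1) (hb i' *v axis q 1)))"
    unfolding hom_pair_def mat_comb_mult
    by (simp add: cdot_sum_left cdot_sum_right cdot_scale_left cdot_scale_right sum_distrib_left mult_ac)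
  also have "\<dots> = (\<Sum>i\<in>UNIV. \<Sum>i'\<in>UNIV. \<Sum>q\<in>UNIV. f$i * (h$i' * cdot (fb i *v axis q 1) (hb i' *v axis q 1)))"
    by (rule sum3_swap2)
  also have "\<dots> = pp hb fb f h"
    by (simp add: pp_def hom_pair_def sum_distrib_left mult_ac)
  finally show ?thesis .
qed

lemma eps_fst: "fst (eps hb fb X) = (\<Sum>j\<in>UNIV. mat_comb (column j (fst X)) hb *v axis j 1)"
proof (rule Finite_Cartesian_Product.vec_eq_iff[THEN iffD2], rule allI)
  fix p
  obtain X1 X2 where X: "X = (X1, X2)" by (cases X)
  have "fst (eps hb fb X) $ p = (\<Sum>i\<in>UNIV. \<Sum>j\<in>UNIV. X1$i$j * (hb i *v axis j 1)$p)"
    by (simp add: X eps_def)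
  also have "\<dots> = (\<Sum>j\<in>UNIV. \<Sum>i\<in>UNIV. X1$i$j * (hb i *v axis j 1)$p)" by (rule sum.swap)
  also have "\<dots> = (\<Sum>j\<in>UNIV. mat_comb (column j (fst X)) hb *v axis j 1) $ p"
    by (simp add: X sum_component mat_comb_mult column_def)
  finally show "fst (eps hb fb X) $ p = (\<Sum>j\<in>UNIV. mat_comb (column j (fst X)) hb *v axis j 1) $ p" .
qed

lemma eps_snd: "snd (eps hb fb X) = (\<Sum>j\<in>UNIV. mat_comb (column j (snd X)) fb *v axis j 1)"
proof (rule Finite_Cartesian_Product.vec_eq_iff[THEN iffD2], rule allI)
  fix p
  obtain X1 X2 where X: "X = (X1, X2)" by (cases X)
  have "snd (eps hb fb X) $ p = (\<Sum>i\<in>UNIV. \<Sum>j\<in>UNIV. X2$i$j * (fb i *v axis j 1)$p)"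
    by (simp add: X eps_def)
  also have "\<dots> = (\<Sum>j\<in>UNIV. \<Sum>i\<in>UNIV. X2$i$j * (fb i *v axis j 1)$p)" by (rule sum.swap)
  also have "\<dots> = (\<Sum>j\<in>UNIV. mat_comb (column j (snd X)) fb *v axis j 1) $ p"
    by (simp add: X sum_component mat_comb_mult column_def)
  finally show "snd (eps hb fb X) $ p = (\<Sum>j\<in>UNIV. mat_comb (column j (snd X)) fb *v axis j 1) $ p" .
qed

lemma Q_formula:
  fixes hb :: "'k::finite \<Rightarrow> complex^'r^'v" and fb :: "'l::finite \<Rightarrow> complex^'r^'v"
  assumes key: "\<And>f h x y. f \<in> Hd \<Longrightarrow> h \<in> H \<Longrightarrow> cdot (f *v x) (h *v y) = hom_pair f h / of_nat CARD('r) * cdot x y"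
    and mf: "\<And>x. mat_comb x fb \<in> Hd" and mh: "\<And>x. mat_comb x hb \<in> H"
  shows "cdot (snd (eps hb fb X)) (fst (eps hb fb Y)) =
     (\<Sum>j\<in>UNIV. pp hb fb (column j (snd X)) (column j (fst Y))) / of_nat CARD('r)"
proof -
  have "cdot (snd (eps hb fb X)) (fst (eps hb fb Y)) =
     (\<Sum>j'\<in>UNIV. \<Sum>j\<in>UNIV. hom_pair (mat_comb (column j (snd X)) fb) (mat_comb (column j' (fst Y)) hb) / of_nat CARD('r)
        * (if j = j' then 1 else 0))"
    unfolding eps_fst eps_snd cdot_sum_left cdot_sum_right
    by (simp only: key[OF mf mh] cdot_axis)
  also have "\<dots> = (\<Sum>j\<in>UNIV. hom_pair (mat_comb (column j (snd X)) fb) (mat_comb (column j (fst Y)) hb) / of_nat CARD('r))"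
    by (simp add: if_distrib cong: if_cong)
  also have "\<dots> = (\<Sum>j\<in>UNIV. pp hb fb (column j (snd X)) (column j (fst Y))) / of_nat CARD('r)"
    by (simp add: hp_pp sum_divide_distrib)
  finally show ?thesis .
qed

lemma pp_col: "pp hb fb (column j (Z ** transpose \<psi>)) h = (\<Sum>j'\<in>UNIV. \<psi>$j$j' * pp hb fb (column j' Z) h)"
proof -
  have "pp hb fb (column j (Z ** transpose \<psi>)) h =
     (\<Sum>i\<in>UNIV. \<Sum>i'\<in>UNIV. \<Sum>j'\<in>UNIV. \<psi>$j$j' * (Z$i$j' * h$i' * hom_pair (fb i) (hb i')))"
    by (simp add: pp_def column_def matrix_matrix_mult_def transpose_def sum_distrib_left sum_distrib_right mult_ac)
  also have "\<dots> = (\<Sum>j'\<in>UNIV. \<Sum>i\<in>UNIV. \<Sum>i'\<in>UNIV. \<psi>$j$j' * (Z$i$j' * h$i' * hom_pair (fb i) (hb i')))"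
    by (rule sum3_swap)
  also have "\<dots> = (\<Sum>j'\<in>UNIV. \<psi>$j$j' * pp hb fb (column j' Z) h)"
    by (simp add: pp_def column_def sum_distrib_left)
  finally show ?thesis .
qed

lemma abstract_equiv:
  fixes u :: "'x \<Rightarrow> 'j::finite \<Rightarrow> 'w::zero" and \<Phi> :: "'x \<Rightarrow> 'x" and M :: "'w \<Rightarrow> 'w"
    and S :: "'w \<Rightarrow> 'w \<Rightarrow> complex" and b :: "'x \<Rightarrow> 'x \<Rightarrow> complex" and \<psi> :: "'j \<Rightarrow> 'j \<Rightarrow> complex"
  assumes surj: "\<And>fam. \<exists>X. u X = fam"
    and comp: "\<And>X j. u (\<Phi> X) j = M (u X j)"
    and bform: "\<And>X Y. b X Y = c * (\<Sum>j\<in>UNIV. \<Sum>j'\<in>UNIV. \<psi> j j' * S (u X j') (u Y j))"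
    and S0: "\<And>w. S 0 w = 0" "\<And>w. S w 0 = 0" and M0: "M 0 = 0" and c: "c \<noteq> 0" and \<psi>: "\<psi> j1 j0 \<noteq> 0"
  shows "respects_isometry b \<Phi> \<longleftrightarrow> respects_isometry S M"
    and "respects_infinitesimal b \<Phi> \<longleftrightarrow> respects_infinitesimal S M"
proof -
  have pick: "\<exists>X Y. u X = (\<lambda>j. if j = j0 then w1 else 0) \<and> u Y = (\<lambda>j. if j = j1 then w2 else 0)" for w1 w2
    using surj by metis
  have delta: "(\<Sum>j\<in>UNIV. \<Sum>j'\<in>UNIV. \<psi> j j' * F (if j' = j0 then w1 else 0) (if j = j1 then w2 else 0))
      = \<psi> j1 j0 * F w1 w2" if F0: "\<And>w. F 0 w = 0" "\<And>w. F w 0 = 0" for F :: "'w \<Rightarrow> 'w \<Rightarrow> complex" and w1 w2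
  proof -
    have "\<And>j j'. \<psi> j j' * F (if j' = j0 then w1 else 0) (if j = j1 then w2 else 0) =
       (if j' = j0 then (if j = j1 then \<psi> j1 j0 * F w1 w2 else 0) else 0)"
      using F0 by auto
    then show ?thesis by simp
  qed
  show "respects_isometry b \<Phi> \<longleftrightarrow> respects_isometry S M"
  proof
    assume h: "respects_isometry b \<Phi>"
    show "respects_isometry S M" unfolding respects_isometry_def
    proof (intro allI)
      fix w1 w2
      obtain X Y where X: "u X = (\<lambda>j. if j = j0 then w1 else 0)" and Y: "u Y = (\<lambda>j. if j = j1 then w2 else 0)"
        using pick by blast
      have "b (\<Phi> X) (\<Phi> Y) = c * (\<psi> j1 j0 * S (M w1) (M w2))"
      proof -
        have "b (\<Phi> X) (\<Phi> Y) = c * (\<Sum>j\<in>UNIV. \<Sum>j'\<in>UNIV. \<psi> j j' *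
            (\<lambda>a b. S (M a) (M b)) (if j' = j0 then w1 else 0) (if j = j1 then w2 else 0))"
          unfolding bform comp X Y by (simp add: if_distrib[of M] M0 cong: if_cong)
        also have "\<dots> = c * (\<psi> j1 j0 * S (M w1) (M w2))"
          by (subst delta) (auto simp: M0 S0)
        finally show ?thesis .
      qed
      moreover have "b X Y = c * (\<psi> j1 j0 * S w1 w2)"
        unfolding bform X Y by (subst delta) (auto simp: S0)
      moreover have "b (\<Phi> X) (\<Phi> Y) = b X Y" using h by (simp add: respects_isometry_def)
      ultimately show "S (M w1) (M w2) = S w1 w2" using c \<psi> by simp
    qed
  next
    assume h: "respects_isometry S M"
    then show "respects_isometry b \<Phi>"
      unfolding respects_isometry_def by (simp add: bform comp)
  qed
  show "respects_infinitesimal b \<Phi> \<longleftrightarrow> respects_infinitesimal S M"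
  proof
    assume h: "respects_infinitesimal b \<Phi>"
    show "respects_infinitesimal S M" unfolding respects_infinitesimal_def
    proof (intro allI)
      fix w1 w2
      obtain X Y where X: "u X = (\<lambda>j. if j = j0 then w1 else 0)" and Y: "u Y = (\<lambda>j. if j = j1 then w2 else 0)"
        using pick by blast
      have "b (\<Phi> X) Y + b X (\<Phi> Y) = c * (\<Sum>j\<in>UNIV. \<Sum>j'\<in>UNIV. \<psi> j j' *
            (\<lambda>a b. S (M a) b + S a (M b)) (if j' = j0 then w1 else 0) (if j = j1 then w2 else 0))"
        unfolding bform comp X Y
        by (simp add: if_distrib[of M] M0 ring_distribs sum.distrib cong: if_cong)
      also have "\<dots> = c * (\<psi> j1 j0 * (S (M w1) w2 + S w1 (M w2)))"
        by (subst delta) (auto simp: M0 S0)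
      finally have "c * (\<psi> j1 j0 * (S (M w1) w2 + S w1 (M w2))) = 0"
        using h by (simp add: respects_infinitesimal_def)
      then show "S (M w1) w2 + S w1 (M w2) = 0" using c \<psi> by simp
    qed
  next
    assume h: "respects_infinitesimal S M"
    have "b (\<Phi> X) Y + b X (\<Phi> Y) = 0" for X Y
    proof -
      have "b (\<Phi> X) Y + b X (\<Phi> Y) = c * (\<Sum>j\<in>UNIV. \<Sum>j'\<in>UNIV. \<psi> j j' *
            (S (M (u X j')) (u Y j) + S (u X j') (M (u Y j))))"
        unfolding bform comp by (simp add: ring_distribs sum.distrib)
      also have "\<dots> = 0" using h by (simp add: respects_infinitesimal_def)
      finally show ?thesis .
    qed
    then show "respects_infinitesimal b \<Phi>" unfolding respects_infinitesimal_def by blast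
  qed
qed


lemma column_mult: "column j (P ** Q) = P *v column j Q"
  by (simp add: Finite_Cartesian_Product.vec_eq_iff column_def matrix_matrix_mult_def matrix_vector_mult_def)
lemma column_add: "column j (P + Q) = column j P + column j Q"
  by (simp add: Finite_Cartesian_Product.vec_eq_iff column_def)
lemma matrix_add_rdistrib': "(P + Q) ** R = P ** R + Q ** (R :: 'a::semiring_1^'c^'b)"
  by (simp add: Finite_Cartesian_Product.vec_eq_iff matrix_matrix_mult_def ring_distribs sum.distrib)
lemma mv_component: "(P *v x) $ i = cdot (P $ i) x"
  by (simp add: matrix_vector_mult_def cdot_def)
lemma form_b0_alt: "form_b0 w1 w2 = cdot (snd w1) (fst w2) + cdot (snd w2) (fst w1)"
  by (cases w1, cases w2) (simp add: form_b0_def)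

theorem proposition3p13:
  fixes G :: "('g::t2_space, 'z) monoid_scheme"
    and \<rho>R :: "'g \<Rightarrow> complex^'r^'r"
    and \<rho>V :: "'g \<Rightarrow> complex^'v^'v"
    and hb :: "'k::finite \<Rightarrow> complex^'r^'v"
    and fb :: "'l::finite \<Rightarrow> complex^'r^'v"
    and \<psi> :: "complex^'r^'r"
    and A :: "complex^'k^'k" and B :: "complex^'l^'k"
    and K :: "complex^'k^'l" and D :: "complex^'l^'l"
  assumes G: "compact_group G"
    and R_rep: "unitary_rep G \<rho>R" and R_irr: "irreducible_rep G \<rho>R"
    and R_selfdual: "\<exists>P::complex^'r^'r. invertible P \<and> (\<forall>g\<in>carrier G. P ** \<rho>R g = dual_rep \<rho>R g ** P)"
    and V_rep: "unitary_rep G \<rho>V"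
    and V_isotypic: "\<And>W. irreducible_subrep G \<rho>V W \<Longrightarrow> subrep_iso G \<rho>R \<rho>V W"
    and H_basis: "is_mat_basis hb (equiv_maps G \<rho>R \<rho>V)"
    and Hd_basis: "is_mat_basis fb (equiv_maps G (dual_rep \<rho>R) (dual_rep \<rho>V))"
    and eps_iso: "bij (eps hb fb)"
    and \<psi>_iso: "invertible \<psi>"
    and \<psi>_equiv: "\<forall>g\<in>carrier G. \<psi> ** \<rho>R g = dual_rep \<rho>R g ** \<psi>"
  shows "((\<forall>r t. cdot (\<psi> *v r) t = cdot (\<psi> *v t) r) \<longrightarrow>
            (bij (block_op A B K D) \<longrightarrow>
               (respects_isometry (form_b hb fb) (Phi_op \<psi> A B K D)
                \<longleftrightarrow> respects_isometry (form_s hb fb) (block_op A B K D))) \<and>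
            (respects_infinitesimal (form_b hb fb) (Phi_op \<psi> A B K D)
               \<longleftrightarrow> respects_infinitesimal (form_s hb fb) (block_op A B K D))) \<and>
         ((\<forall>r t. cdot (\<psi> *v r) t = - cdot (\<psi> *v t) r) \<longrightarrow>
            (bij (block_op A B K D) \<longrightarrow>
               (respects_isometry (form_b hb fb) (Phi_op \<psi> A B K D)
                \<longleftrightarrow> respects_isometry (form_a hb fb) (block_op A B K D))) \<and>
            (respects_infinitesimal (form_b hb fb) (Phi_op \<psi> A B K D)
               \<longleftrightarrow> respects_infinitesimal (form_a hb fb) (block_op A B K D)))"
  proof -
  define n where "n = (of_nat CARD('r) :: complex)"
  define T where "T = transpose (matrix_inv \<psi>)"
  define u where "u = (\<lambda>(X::(complex^'r^'k) \<times> (complex^'r^'l)) j. (column j (fst X), column j (snd X ** T)))"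
  have n0: "n \<noteq> 0" by (simp add: n_def)
  have Tpsi: "T ** transpose \<psi> = Finite_Cartesian_Product.mat 1" "transpose \<psi> ** T = Finite_Cartesian_Product.mat 1"
    using inv_props[OF \<psi>_iso] unfolding T_def
    by (metis matrix_transpose_mul transpose_mat)+
  have mf: "\<And>x. mat_comb x fb \<in> equiv_maps G (dual_rep \<rho>R) (dual_rep \<rho>V)"
    using Hd_basis by (simp add: is_mat_basis_def)
  have mh: "\<And>x. mat_comb x hb \<in> equiv_maps G \<rho>R \<rho>V"
    using H_basis by (simp add: is_mat_basis_def)
  note key = key_lemma[OF R_rep R_irr V_rep]
  have Q: "cdot (snd (eps hb fb X)) (fst (eps hb fb Y)) =
     (\<Sum>j\<in>UNIV. \<Sum>j'\<in>UNIV. \<psi>$j$j' * pp hb fb (column j' (snd X ** T)) (column j (fst Y))) / n" for X Y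
  proof -
    define Z where "Z = snd X ** T"
    have e: "snd X = Z ** transpose \<psi>"
      by (simp add: Z_def matrix_mul_assoc[symmetric] Tpsi)
    have pc: "pp hb fb (column j (snd X)) h = (\<Sum>j'\<in>UNIV. \<psi>$j$j' * pp hb fb (column j' Z) h)" for j h
      unfolding e by (rule pp_col)
    have "cdot (snd (eps hb fb X)) (fst (eps hb fb Y)) =
     (\<Sum>j\<in>UNIV. pp hb fb (column j (snd X)) (column j (fst Y))) / of_nat CARD('r)"
      by (rule Q_formula[OF key mf mh])
    then show ?thesis
      by (simp only: pc n_def Z_def)
  qed
  have b_exp: "form_b hb fb X Y =
      (\<Sum>j\<in>UNIV. \<Sum>j'\<in>UNIV. \<psi>$j$j' * pp hb fb (column j' (snd X ** T)) (column j (fst Y))) / n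
    + (\<Sum>j\<in>UNIV. \<Sum>j'\<in>UNIV. \<psi>$j'$j * pp hb fb (column j (snd Y ** T)) (column j' (fst X))) / n" for X Y
  proof -
    have sw: "(\<Sum>j\<in>UNIV. \<Sum>j'\<in>UNIV. \<psi>$j$j' * pp hb fb (column j' (snd Y ** T)) (column j (fst X)))
      = (\<Sum>j\<in>UNIV. \<Sum>j'\<in>UNIV. \<psi>$j'$j * pp hb fb (column j (snd Y ** T)) (column j' (fst X)))"
      by (rule sum.swap)
    show ?thesis unfolding form_b_def form_b0_alt Q sw ..
  qed
  have surj: "\<exists>X. u X = fam" for fam
  proof
    define Z :: "complex^'r^'l" where "Z = (\<chi> i j. snd (fam j) $ i)"
    show "u ((\<chi> i j. fst (fam j) $ i), Z ** transpose \<psi>) = fam"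
      by (rule ext) (simp add: u_def matrix_mul_assoc[symmetric] Tpsi column_def Z_def
          Finite_Cartesian_Product.vec_eq_iff prod_eq_iff)
  qed
  have comp: "u (Phi_op \<psi> A B K D X) j = block_op A B K D (u X j)" for X j
  proof -
    obtain X1 X2 where X: "X = (X1, X2)" by (cases X)
    have e1: "A ** X1 + B ** X2 ** T = A ** X1 + B ** (X2 ** T)"
      by (simp add: matrix_mul_assoc)
    have e2: "(K ** X1 ** transpose \<psi> + D ** X2) ** T = K ** X1 + D ** (X2 ** T)"
      by (simp add: matrix_add_rdistrib' Tpsi flip: matrix_mul_assoc)
    show ?thesis
      unfolding X u_def Phi_op_def block_op_def T_def[symmetric]
      by (simp only: prod.case fst_conv snd_conv e1 e2 column_add column_mult)
  qed
  have M0: "block_op A B K D 0 = 0" by (simp add: block_op_def zero_prod_def)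
  obtain j1 j0 where \<psi>nz: "\<psi>$j1$j0 \<noteq> 0"
  proof -
    have "\<psi> \<noteq> 0"
    proof
      assume "\<psi> = 0"
      then have "(Finite_Cartesian_Product.mat 1 :: complex^'r^'r) = 0" using inv_props(1)[OF \<psi>_iso]
        by (simp add: matrix_matrix_mult_def Finite_Cartesian_Product.vec_eq_iff)
      then have "(Finite_Cartesian_Product.mat 1 :: complex^'r^'r) $ undefined $ undefined = 0" by simp
      then show False by (simp add: Finite_Cartesian_Product.mat_def)
    qed
    then show ?thesis using that by (auto simp: Finite_Cartesian_Product.vec_eq_iff)
  qed
  have c0: "1 / n \<noteq> 0" using n0 by simp
  have ent: "cdot (\<psi> *v axis a 1) (axis b 1) = \<psi>$b$a" for a b
    by (simp only: cdot_axis_right mv_component)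
  show ?thesis
  proof (intro conjI impI)
    assume sym0: "\<forall>r t. cdot (\<psi> *v r) t = cdot (\<psi> *v t) r"
    have sym: "\<psi>$j'$j = \<psi>$j$j'" for j j'
      using sym0[rule_format, of "axis j 1" "axis j' 1"] by (simp add: ent)
    have sw2: "(\<Sum>j\<in>UNIV. \<Sum>j'\<in>UNIV. \<psi>$j'$j * pp hb fb (column j (snd Y ** T)) (column j' (fst X)))
      = (\<Sum>j\<in>UNIV. \<Sum>j'\<in>UNIV. \<psi>$j$j' * pp hb fb (column j (snd Y ** T)) (column j' (fst X)))" for X Y
      by (rule sum.cong[OF refl], rule sum.cong[OF refl], subst sym, rule refl)
    have S0: "form_s hb fb 0 w = 0" "form_s hb fb w 0 = 0" for w
      by (cases w, simp add: form_s_def hp_pp pp_def zero_prod_def)+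
    have bform: "form_b hb fb X Y = 1 / n * (\<Sum>j\<in>UNIV. \<Sum>j'\<in>UNIV. \<psi>$j$j' * form_s hb fb (u X j') (u Y j))" for X Y
      unfolding b_exp sw2
      by (simp add: u_def form_s_def hp_pp ring_distribs sum.distrib add_divide_distrib)
    note AE = abstract_equiv[of u "Phi_op \<psi> A B K D" "block_op A B K D" "form_b hb fb" "1/n" "\<lambda>j j'. \<psi>$j$j'"
        "form_s hb fb", OF surj comp bform S0 M0 c0 \<psi>nz]
    show "respects_isometry (form_b hb fb) (Phi_op \<psi> A B K D) =
      respects_isometry (form_s hb fb) (block_op A B K D)" by (rule AE(1))
    show "respects_infinitesimal (form_b hb fb) (Phi_op \<psi> A B K D) =
      respects_infinitesimal (form_s hb fb) (block_op A B K D)" by (rule AE(2))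
  next
    assume alt0: "\<forall>r t. cdot (\<psi> *v r) t = - cdot (\<psi> *v t) r"
    have alt: "\<psi>$j'$j = - \<psi>$j$j'" for j j'
      using alt0[rule_format, of "axis j 1" "axis j' 1"] by (simp add: ent)
    have sw2: "(\<Sum>j\<in>UNIV. \<Sum>j'\<in>UNIV. \<psi>$j'$j * pp hb fb (column j (snd Y ** T)) (column j' (fst X)))
      = (\<Sum>j\<in>UNIV. \<Sum>j'\<in>UNIV. - \<psi>$j$j' * pp hb fb (column j (snd Y ** T)) (column j' (fst X)))" for X Y
      by (rule sum.cong[OF refl], rule sum.cong[OF refl], subst alt, rule refl)
    have S0: "form_a hb fb 0 w = 0" "form_a hb fb w 0 = 0" for w
      by (cases w, simp add: form_a_def hp_pp pp_def zero_prod_def)+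
    have bform: "form_b hb fb X Y = 1 / n * (\<Sum>j\<in>UNIV. \<Sum>j'\<in>UNIV. \<psi>$j$j' * form_a hb fb (u X j') (u Y j))" for X Y
      unfolding b_exp sw2
      by (simp add: u_def form_a_def hp_pp ring_distribs sum.distrib add_divide_distrib sum_subtractf
          diff_divide_distrib sum_negf)
    note AE = abstract_equiv[of u "Phi_op \<psi> A B K D" "block_op A B K D" "form_b hb fb" "1/n" "\<lambda>j j'. \<psi>$j$j'"
        "form_a hb fb", OF surj comp bform S0 M0 c0 \<psi>nz]
    show "respects_isometry (form_b hb fb) (Phi_op \<psi> A B K D) =
      respects_isometry (form_a hb fb) (block_op A B K D)" by (rule AE(1))
    show "respects_infinitesimal (form_b hb fb) (Phi_op \<psi> A B K D) =
      respects_infinitesimal (form_a hb fb) (block_op A B K D)" by (rule AE(2))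
  qed
qed

end
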